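(* There exists a positive integer $d_0$ such that the following holds for all integers $d \geq d_0$. Let $n \geq d+1$ be an even integer, and let $G$ be a $d$-regular graph on $[n]$. Then there exists a balanced bipartition $\{X,Y\}$ of $[n]$ (i.e. $|X|=|Y|=n/2$) such that for each graph $H \in \{G[X,Y], G[X], G[Y]\}$, we have $\frac{d}{2}-d^{2/3}\leq \deg_H(v) \leq \frac{d}{2} + d^{2/3}$ for every $v \in V(H)$.
   Context: Graphs are simple and finite. For $U\subseteq V(G)$, $G[U]$ is the induced subgraph on $U$; for disjoint $X,Y\subseteq V(G)$, $G[X,Y]$ is the bipartite subgraph with vertex set $X\cup Y$ consisting of all edges of $G$ with one endpoint in $X$ and the other in $Y$. *)

theory Defs
  imports Complex_Main
begin

definition simple_graph_on :: "nat set \<Rightarrow> (nat \<Rightarrow> nat \<Rightarrow> bool) \<Rightarrow> bool" where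
  "simple_graph_on V E \<longleftrightarrow> (\<forall>u v. E u v \<longrightarrow> u \<in> V \<and> v \<in> V) \<and>
     (\<forall>u v. E u v \<longrightarrow> E v u) \<and> (\<forall>v. \<not> E v v)"

definition nbhd :: "(nat \<Rightarrow> nat \<Rightarrow> bool) \<Rightarrow> nat \<Rightarrow> nat set" where
  "nbhd E v = {u. E v u}"

definition regular_graph_on :: "nat set \<Rightarrow> (nat \<Rightarrow> nat \<Rightarrow> bool) \<Rightarrow> nat \<Rightarrow> bool" where
  "regular_graph_on V E d \<longleftrightarrow> simple_graph_on V E \<and> (\<forall>v\<in>V. card (nbhd E v) = d)"

definition induced :: "(nat \<Rightarrow> nat \<Rightarrow> bool) \<Rightarrow> nat set \<Rightarrow> nat \<Rightarrow> nat \<Rightarrow> bool" where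
  "induced E U u v \<longleftrightarrow> E u v \<and> u \<in> U \<and> v \<in> U"

definition bipartite_sub :: "(nat \<Rightarrow> nat \<Rightarrow> bool) \<Rightarrow> nat set \<Rightarrow> nat set \<Rightarrow> nat \<Rightarrow> nat \<Rightarrow> bool" where
  "bipartite_sub E X Y u v \<longleftrightarrow> E u v \<and> ((u \<in> X \<and> v \<in> Y) \<or> (u \<in> Y \<and> v \<in> X))"

definition degree :: "(nat \<Rightarrow> nat \<Rightarrow> bool) \<Rightarrow> nat \<Rightarrow> nat" where
  "degree E v = card (nbhd E v)"

end

theory Submission
  imports Defs "HOL-Probability.Hoeffding"
begin

hide_const (open) Polynomial.degree




lemma cosh_bound: "exp (y::real) + exp (- y) \<le> 2 * exp (y^2/2)"
proof -
  have key: "exp y + exp (-y) \<le> 2 * exp (y^2/2)" if "y \<ge> 0" for y :: real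
  proof -
    have H: "-(2*y) * (1/2) + ln (1 + (1/2) * (exp (2*y) - 1)) \<le> (2*y)^2/8"
      using Hoeffdings_lemma_aux[of "2*y" "1/2"] that by simp
    have pos: "exp y + exp (-y) > 0" by (simp add: add_pos_pos)
    have eq: "1 + (1/2) * (exp (2*y) - 1) = exp y * ((exp y + exp (-y))/2)"
      by (simp add: field_simps exp_minus flip: exp_add)
    have "ln (1 + (1/2) * (exp (2*y) - 1)) = ln (exp y * ((exp y + exp (-y))/2))"
      by (simp only: eq)
    also have "\<dots> = y + ln ((exp y + exp (-y))/2)"
      using pos by (subst ln_mult) auto
    finally have "ln (1 + (1/2) * (exp (2*y) - 1)) = y + ln ((exp y + exp (-y))/2)" .
    with H have "- y + (y + ln ((exp y + exp (-y))/2)) \<le> y^2/2"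
      by (simp add: power2_eq_square)
    hence "ln ((exp y + exp (-y))/2) \<le> y^2/2" by simp
    hence "(exp y + exp (-y))/2 \<le> exp (y^2/2)"
      using pos by (metis exp_le_cancel_iff exp_ln half_gt_zero)
    thus ?thesis by simp
  qed
  show ?thesis
  proof (cases "y \<ge> 0")
    case True thus ?thesis using key by blast
  next
    case False thus ?thesis using key[of "-y"] by (simp add: add.commute)
  qed
qed

definition UU :: "nat set set \<Rightarrow> nat set set \<Rightarrow> nat set set" where
  "UU X Y = (\<lambda>(a,b). a \<union> b) ` (X \<times> Y)"

lemma UU_mem:
  assumes "X \<subseteq> Pow (I \<inter> S)" "Y \<subseteq> Pow (I - S)"
  shows "\<sigma> \<in> UU X Y \<longleftrightarrow> \<sigma> \<subseteq> I \<and> \<sigma> \<inter> S \<in> X \<and> \<sigma> - S \<in> Y"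
proof
  assume "\<sigma> \<in> UU X Y"
  then obtain a b where ab: "a \<in> X" "b \<in> Y" "\<sigma> = a \<union> b" unfolding UU_def by auto
  have "\<sigma> \<inter> S = a" "\<sigma> - S = b" using ab assms by auto
  thus "\<sigma> \<subseteq> I \<and> \<sigma> \<inter> S \<in> X \<and> \<sigma> - S \<in> Y" using ab assms by auto
next
  assume "\<sigma> \<subseteq> I \<and> \<sigma> \<inter> S \<in> X \<and> \<sigma> - S \<in> Y"
  moreover have "\<sigma> = (\<sigma> \<inter> S) \<union> (\<sigma> - S)" by auto
  ultimately show "\<sigma> \<in> UU X Y" unfolding UU_def by (auto intro!: image_eqI[where x="(\<sigma> \<inter> S, \<sigma> - S)"])
qed

lemma UU_card:
  assumes "finite I" "X \<subseteq> Pow (I \<inter> S)" "Y \<subseteq> Pow (I - S)"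
  shows "card (UU X Y) = card X * card Y"
proof -
  have "inj_on (\<lambda>(a,b). a \<union> b) (X \<times> Y)"
  proof (rule inj_onI, clarify)
    fix a b a' b' assume "a \<in> X" "b \<in> Y" "a' \<in> X" "b' \<in> Y" "a \<union> b = a' \<union> b'"
    hence "(a \<union> b) \<inter> S = (a' \<union> b') \<inter> S" "(a \<union> b) - S = (a' \<union> b') - S" by auto
    moreover have "(a \<union> b) \<inter> S = a" "(a' \<union> b') \<inter> S = a'" "(a \<union> b) - S = b" "(a' \<union> b') - S = b'"
      using \<open>a \<in> X\<close> \<open>b \<in> Y\<close> \<open>a' \<in> X\<close> \<open>b' \<in> Y\<close> assms by auto
    ultimately show "a = a' \<and> b = b'" by simp
  qed
  thus ?thesis unfolding UU_def by (simp add: card_image card_cartesian_product)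
qed

lemma indep:
  fixes I :: "nat set"
  assumes fin: "finite I" and AI: "A \<subseteq> Pow I" and BI: "B \<subseteq> Pow I"
    and dA: "\<forall>\<sigma>\<in>Pow I. \<sigma> \<in> A \<longleftrightarrow> \<sigma> \<inter> S \<in> A"
    and dB: "\<forall>\<sigma>\<in>Pow I. \<sigma> \<in> B \<longleftrightarrow> \<sigma> - S \<in> B"
  shows "card (A \<inter> B) * card (Pow I) = card A * card B"
proof -
  define A0 where "A0 = A \<inter> Pow (I \<inter> S)"
  define B0 where "B0 = B \<inter> Pow (I - S)"
  have s: "A0 \<subseteq> Pow (I \<inter> S)" "B0 \<subseteq> Pow (I - S)" "Pow (I \<inter> S) \<subseteq> Pow (I \<inter> S)" "Pow (I - S) \<subseteq> Pow (I - S)"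
    unfolding A0_def B0_def by auto
  have e1: "A \<inter> B = UU A0 B0"
  proof (rule set_eqI)
    fix \<sigma> show "\<sigma> \<in> A \<inter> B \<longleftrightarrow> \<sigma> \<in> UU A0 B0"
      unfolding UU_mem[OF s(1) s(2)] using dA dB AI BI by (auto simp: A0_def B0_def)
  qed
  have e2: "A = UU A0 (Pow (I - S))"
  proof (rule set_eqI)
    fix \<sigma> show "\<sigma> \<in> A \<longleftrightarrow> \<sigma> \<in> UU A0 (Pow (I - S))"
      unfolding UU_mem[OF s(1) s(4)] using dA AI by (auto simp: A0_def B0_def)
  qed
  have e3: "B = UU (Pow (I \<inter> S)) B0"
  proof (rule set_eqI)
    fix \<sigma> show "\<sigma> \<in> B \<longleftrightarrow> \<sigma> \<in> UU (Pow (I \<inter> S)) B0"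
      unfolding UU_mem[OF s(3) s(2)] using dB BI by (auto simp: A0_def B0_def)
  qed
  have e4: "Pow I = UU (Pow (I \<inter> S)) (Pow (I - S))"
  proof (rule set_eqI)
    fix \<sigma> show "\<sigma> \<in> Pow I \<longleftrightarrow> \<sigma> \<in> UU (Pow (I \<inter> S)) (Pow (I - S))"
      unfolding UU_mem[OF s(3) s(4)] using AI by (auto simp: A0_def B0_def)
  qed
  show ?thesis
    apply (subst e1, subst e4, subst e2, subst e3)
    unfolding UU_card[OF fin s(1) s(2)] UU_card[OF fin s(3) s(4)] UU_card[OF fin s(1) s(4)] UU_card[OF fin s(3) s(2)]
    by simp
qed

lemma lll:
  fixes I :: "nat set" and V :: "'v set" and A :: "'v \<Rightarrow> nat set set" and S :: "'v \<Rightarrow> nat set"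
    and p :: real and D :: nat
  assumes finI: "finite I" and finV: "finite V"
    and AI: "\<And>v. v \<in> V \<Longrightarrow> A v \<subseteq> Pow I"
    and det: "\<And>v \<sigma>. v \<in> V \<Longrightarrow> \<sigma> \<in> Pow I \<Longrightarrow> \<sigma> \<in> A v \<longleftrightarrow> \<sigma> \<inter> S v \<in> A v"
    and prob: "\<And>v. v \<in> V \<Longrightarrow> real (card (A v)) \<le> p * card (Pow I)"
    and dep: "\<And>v. v \<in> V \<Longrightarrow> card {w\<in>V. S w \<inter> S v \<noteq> {}} \<le> D"
    and pD: "4 * p * D \<le> 1" and p0: "0 \<le> p" and p1: "p < 1/2"
  shows "Pow I - \<Union>(A ` V) \<noteq> {}"
proof -
  define B where "B T = Pow I - \<Union>(A ` T)" for T
  have finB: "finite (B T)" for T unfolding B_def using finI by auto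
  have BI: "B T \<subseteq> Pow I" for T unfolding B_def by auto
  have cP: "card (Pow I) > 0" using finI by (auto simp: card_gt_0_iff)
  have main: "\<forall>T. T \<subseteq> V \<longrightarrow> card T = k \<longrightarrow> (card (B T) > 0 \<and>
      (\<forall>v\<in>V. real (card (A v \<inter> B T)) \<le> 2 * p * card (B T)))" for k
  proof (induction k rule: less_induct)
    case (less k)
    show ?case
    proof (intro allI impI)
      fix T assume TV: "T \<subseteq> V" and cT: "card T = k"
      have finT: "finite T" using TV finV finite_subset by blast
      have posB: "card (B T) > 0"
      proof (cases "T = {}")
        case True
        thus ?thesis using cP unfolding B_def by simp
      next
        case False
        then obtain w where w: "w \<in> T" by auto
        define T' where "T' = T - {w}"
        have "card T' < k" using w finT cT unfolding T'_def by (metis card_Diff1_less)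
        hence IH: "card (B T') > 0 \<and> (\<forall>v\<in>V. real (card (A v \<inter> B T')) \<le> 2 * p * card (B T'))"
          using less.IH TV unfolding T'_def by blast
        have wV: "w \<in> V" using w TV by auto
        have "real (card (A w \<inter> B T')) \<le> 2 * p * card (B T')" using IH wV by blast
        also have "\<dots> < card (B T')" using IH p1 by simp
        finally have lt: "card (A w \<inter> B T') < card (B T')" by simp
        have "B T = B T' - (A w \<inter> B T')" unfolding B_def T'_def using w by auto
        hence "card (B T) = card (B T') - card (A w \<inter> B T')"
          using finB by (simp add: card_Diff_subset)
        thus ?thesis using lt by simp
      qed
      have bnd: "real (card (A v \<inter> B T)) \<le> 2 * p * card (B T)" if vV: "v \<in> V" for v
      proof -
        define G where "G = {w\<in>V. S w \<inter> S v \<noteq> {}}"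
        define T1 where "T1 = T \<inter> G"
        define T2 where "T2 = T - G"
        have detB: "\<forall>\<sigma>\<in>Pow I. \<sigma> \<in> B T2 \<longleftrightarrow> \<sigma> - S v \<in> B T2"
        proof
          fix \<sigma> assume s: "\<sigma> \<in> Pow I"
          have "\<sigma> \<in> A w \<longleftrightarrow> \<sigma> - S v \<in> A w" if "w \<in> T2" for w
          proof -
            have wV: "w \<in> V" and dis: "S w \<inter> S v = {}" using that TV unfolding T2_def G_def by auto
            have "(\<sigma> - S v) \<inter> S w = \<sigma> \<inter> S w" using dis by auto
            thus ?thesis using det[OF wV s] det[OF wV, of "\<sigma> - S v"] s by auto
          qed
          thus "\<sigma> \<in> B T2 \<longleftrightarrow> \<sigma> - S v \<in> B T2" using s unfolding B_def by auto
        qed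
        have "card (A v \<inter> B T2) * card (Pow I) = card (A v) * card (B T2)"
          by (rule indep[OF finI AI[OF vV] BI]) (use det[OF vV] detB in auto)
        hence "real (card (A v \<inter> B T2)) * card (Pow I) = card (A v) * card (B T2)"
          by (metis of_nat_mult)
        also have "\<dots> \<le> p * card (Pow I) * card (B T2)"
          using prob[OF vV] by (simp add: mult_right_mono)
        finally have i2: "real (card (A v \<inter> B T2)) \<le> p * card (B T2)"
          using cP by (simp add: mult.commute mult.left_commute)
        show ?thesis
        proof (cases "T1 = {}")
          case True
          hence "T2 = T" unfolding T1_def T2_def by auto
          thus ?thesis using i2 p0 by (smt (verit) mult_right_mono of_nat_0_le_iff)
        next
          case False
          have "card T2 < k" using False finT cT unfolding T1_def T2_def
            by (metis Diff_Int2 Diff_disjoint Int_Diff_disjoint Int_commute card_Diff_subset_Int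
                 card_gt_0_iff diff_less finite_Int inf.idem) 
          hence IH: "\<forall>w\<in>V. real (card (A w \<inter> B T2)) \<le> 2 * p * card (B T2)"
            using less.IH TV unfolding T2_def by blast
          have sub: "B T2 \<subseteq> B T \<union> (\<Union>w\<in>T1. A w \<inter> B T2)"
            unfolding B_def T1_def T2_def by auto
          have finT1: "finite T1" using finT unfolding T1_def by auto
          have "card (B T2) \<le> card (B T \<union> (\<Union>w\<in>T1. A w \<inter> B T2))"
            using sub finB finT1 by (intro card_mono) auto
          also have "\<dots> \<le> card (B T) + card (\<Union>w\<in>T1. A w \<inter> B T2)" by (rule card_Un_le)
          also have "\<dots> \<le> card (B T) + (\<Sum>w\<in>T1. card (A w \<inter> B T2))"
            using card_UN_le[OF finT1, of "\<lambda>w. A w \<inter> B T2"] by simp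
          finally have c1: "real (card (B T2)) \<le> card (B T) + (\<Sum>w\<in>T1. real (card (A w \<inter> B T2)))"
            by (simp flip: of_nat_sum of_nat_add)
          have "(\<Sum>w\<in>T1. real (card (A w \<inter> B T2))) \<le> (\<Sum>w\<in>T1. 2 * p * card (B T2))"
            by (rule sum_mono) (use IH TV T1_def in auto)
          also have "\<dots> = card T1 * (2 * p * card (B T2))" by simp
          also have "\<dots> \<le> D * (2 * p * card (B T2))"
          proof -
            have "card T1 \<le> card G" unfolding T1_def G_def
              by (rule card_mono) (use finV in auto)
            also have "\<dots> \<le> D" using dep[OF vV] unfolding G_def .
            finally show ?thesis using p0 by (intro mult_right_mono) auto
          qed
          also have "\<dots> \<le> card (B T2) / 2"
          proof -
            have "D * (2 * p * card (B T2)) = (2 * p * D) * card (B T2)" by simp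
            also have "\<dots> \<le> (1/2) * card (B T2)" using pD by (intro mult_right_mono) auto
            finally show ?thesis by simp
          qed
          finally have "real (card (B T2)) \<le> 2 * card (B T)" using c1 by simp
          have "card (A v \<inter> B T) \<le> card (A v \<inter> B T2)"
            by (rule card_mono) (use finB in \<open>auto simp: B_def T2_def\<close>)
          hence "real (card (A v \<inter> B T)) \<le> p * card (B T2)" using i2 by linarith
          also have "\<dots> \<le> p * (2 * card (B T))"
            using \<open>real (card (B T2)) \<le> 2 * card (B T)\<close> p0 by (intro mult_left_mono) auto
          finally show ?thesis by simp
        qed
      qed
      show "card (B T) > 0 \<and> (\<forall>v\<in>V. real (card (A v \<inter> B T)) \<le> 2 * p * card (B T))"
        using posB bnd by blast
    qed
  qed
  have "card (B V) > 0" using main[of "card V"] by blast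
  thus ?thesis unfolding B_def by (metis card.empty less_irrefl)
qed



lemma prod_pow_split:
  assumes "finite I" "\<sigma> \<subseteq> I"
  shows "(\<Prod>i\<in>I. g i (i \<in> \<sigma>)) = (\<Prod>i\<in>\<sigma>. g i True) * (\<Prod>i\<in>I-\<sigma>. g i False)"
proof -
  have "(\<Prod>i\<in>I. g i (i \<in> \<sigma>)) = (\<Prod>i\<in>\<sigma>. g i (i \<in> \<sigma>)) * (\<Prod>i\<in>I-\<sigma>. g i (i \<in> \<sigma>))"
    using assms by (metis prod.subset_diff mult.commute)
  also have "\<dots> = (\<Prod>i\<in>\<sigma>. g i True) * (\<Prod>i\<in>I-\<sigma>. g i False)"
    by (intro arg_cong2[where f="(*)"] prod.cong) auto
  finally show ?thesis .
qed

lemma mgf_bound: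
  fixes I :: "nat set" and h :: "nat \<Rightarrow> bool \<Rightarrow> real"
  assumes fin: "finite I" and anti: "\<And>i. h i False = - h i True"
  shows "(\<Sum>\<sigma>\<in>Pow I. exp (\<mu> * (\<Sum>i\<in>I. h i (i \<in> \<sigma>))))
     \<le> 2 ^ card I * exp (\<mu>^2 * (\<Sum>i\<in>I. (h i True)^2) / 2)"
proof -
  define g where "g i b = exp (\<mu> * h i b)" for i b
  have "(\<Sum>\<sigma>\<in>Pow I. exp (\<mu> * (\<Sum>i\<in>I. h i (i \<in> \<sigma>)))) = (\<Sum>\<sigma>\<in>Pow I. \<Prod>i\<in>I. g i (i \<in> \<sigma>))"
    unfolding g_def by (simp add: sum_distrib_left exp_sum fin)
  also have "\<dots> = (\<Sum>\<sigma>\<in>Pow I. (\<Prod>i\<in>\<sigma>. g i True) * (\<Prod>i\<in>I-\<sigma>. g i False))"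
    by (rule sum.cong) (auto simp: prod_pow_split[OF fin])
  also have "\<dots> = (\<Prod>i\<in>I. g i True + g i False)"
    by (rule prod_add[OF fin, symmetric])
  also have "\<dots> \<le> (\<Prod>i\<in>I. 2 * exp ((\<mu> * h i True)^2 / 2))"
  proof (rule prod_mono)
    fix i assume "i \<in> I"
    have "g i True + g i False = exp (\<mu> * h i True) + exp (- (\<mu> * h i True))"
      unfolding g_def anti by simp
    also have "\<dots> \<le> 2 * exp ((\<mu> * h i True)^2 / 2)" by (rule cosh_bound)
    finally show "0 \<le> g i True + g i False \<and> g i True + g i False \<le> 2 * exp ((\<mu> * h i True)^2 / 2)"
      unfolding g_def by (simp add: add_nonneg_nonneg)
  qed
  also have "\<dots> = 2 ^ card I * exp (\<Sum>i\<in>I. (\<mu> * h i True)^2 / 2)"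
    by (simp add: prod.distrib exp_sum fin)
  also have "(\<Sum>i\<in>I. (\<mu> * h i True)^2 / 2) = \<mu>^2 * (\<Sum>i\<in>I. (h i True)^2) / 2"
    by (simp add: sum_distrib_left sum_divide_distrib power_mult_distrib)
  finally show ?thesis .
qed

lemma tail_bound:
  fixes I :: "nat set" and h :: "nat \<Rightarrow> bool \<Rightarrow> real"
  assumes fin: "finite I" and anti: "\<And>i. h i False = - h i True"
    and c: "(\<Sum>i\<in>I. (h i True)^2) \<le> c" and lam: "l > 0"
  shows "real (card {\<sigma>\<in>Pow I. t < \<bar>\<Sum>i\<in>I. h i (i \<in> \<sigma>)\<bar>})
      \<le> 2 * 2 ^ card I * exp (l^2 * c / 2 - l * t)"
proof -
  define F where "F \<sigma> = (\<Sum>i\<in>I. h i (i \<in> \<sigma>))" for \<sigma>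
  define M where "M = 2 ^ card I * exp (l^2 * c / 2)"
  have mg: "(\<Sum>\<sigma>\<in>Pow I. exp (\<mu> * F \<sigma>)) \<le> M" if "\<mu>^2 = l^2" for \<mu>
  proof -
    have "(\<Sum>\<sigma>\<in>Pow I. exp (\<mu> * F \<sigma>)) \<le> 2 ^ card I * exp (\<mu>^2 * (\<Sum>i\<in>I. (h i True)^2) / 2)"
      unfolding F_def by (rule mgf_bound[OF fin anti])
    also have "\<dots> \<le> M" unfolding M_def using c that
      by (intro mult_left_mono) (auto intro!: mult_left_mono divide_right_mono)
    finally show ?thesis .
  qed
  have one: "real (card {\<sigma>\<in>Pow I. l * t \<le> \<mu> * F \<sigma>}) * exp (l * t) \<le> M" if "\<mu>^2 = l^2" for \<mu>
  proof -
    have "real (card {\<sigma>\<in>Pow I. l * t \<le> \<mu> * F \<sigma>}) * exp (l * t)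
        = (\<Sum>\<sigma>\<in>{\<sigma>\<in>Pow I. l * t \<le> \<mu> * F \<sigma>}. exp (l * t))" by simp
    also have "\<dots> \<le> (\<Sum>\<sigma>\<in>{\<sigma>\<in>Pow I. l * t \<le> \<mu> * F \<sigma>}. exp (\<mu> * F \<sigma>))"
      by (rule sum_mono) auto
    also have "\<dots> \<le> (\<Sum>\<sigma>\<in>Pow I. exp (\<mu> * F \<sigma>))"
      by (rule sum_mono2) (use fin in auto)
    also have "\<dots> \<le> M" by (rule mg[OF that])
    finally show ?thesis .
  qed
  have sub: "{\<sigma>\<in>Pow I. t < \<bar>F \<sigma>\<bar>} \<subseteq> {\<sigma>\<in>Pow I. l * t \<le> l * F \<sigma>} \<union> {\<sigma>\<in>Pow I. l * t \<le> (-l) * F \<sigma>}"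
  proof
    fix \<sigma> assume "\<sigma> \<in> {\<sigma>\<in>Pow I. t < \<bar>F \<sigma>\<bar>}"
    hence s: "\<sigma> \<in> Pow I" "t < F \<sigma> \<or> t < - F \<sigma>" by (auto simp: abs_if split: if_splits)
    show "\<sigma> \<in> {\<sigma>\<in>Pow I. l * t \<le> l * F \<sigma>} \<union> {\<sigma>\<in>Pow I. l * t \<le> (-l) * F \<sigma>}"
    proof (cases "t < F \<sigma>")
      case True thus ?thesis using s lam by (auto intro!: mult_left_mono)
    next
      case False
      hence "t < - F \<sigma>" using s by auto
      hence "l * t \<le> l * (- F \<sigma>)" using lam by (intro mult_left_mono) auto
      thus ?thesis using s by auto
    qed
  qed
  have "card {\<sigma>\<in>Pow I. t < \<bar>F \<sigma>\<bar>} \<le> card ({\<sigma>\<in>Pow I. l * t \<le> l * F \<sigma>} \<union> {\<sigma>\<in>Pow I. l * t \<le> (-l) * F \<sigma>})"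
    by (rule card_mono[OF _ sub]) (use fin in auto)
  also have "\<dots> \<le> card {\<sigma>\<in>Pow I. l * t \<le> l * F \<sigma>} + card {\<sigma>\<in>Pow I. l * t \<le> (-l) * F \<sigma>}"
    by (rule card_Un_le)
  finally have "real (card {\<sigma>\<in>Pow I. t < \<bar>F \<sigma>\<bar>}) * exp (l * t)
     \<le> (real (card {\<sigma>\<in>Pow I. l * t \<le> l * F \<sigma>}) + card {\<sigma>\<in>Pow I. l * t \<le> (-l) * F \<sigma>}) * exp (l * t)"
    by (intro mult_right_mono) (simp_all flip: of_nat_add)
  also have "\<dots> \<le> 2 * M" using one[of l] one[of "-l"] by (simp add: distrib_right)
  finally have "real (card {\<sigma>\<in>Pow I. t < \<bar>F \<sigma>\<bar>}) \<le> 2 * M / exp (l * t)"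
    by (simp add: field_simps)
  also have "2 * M / exp (l * t) = 2 * 2 ^ card I * exp (l^2 * c / 2 - l * t)"
    unfolding M_def by (simp add: exp_diff)
  finally show ?thesis unfolding F_def .
qed



lemma num_bound:
  fixes x :: real assumes "x \<ge> 14000000"
  shows "16 * x^6 \<le> exp x"
proof -
  have "(1 + x / real 7) ^ 7 \<le> exp x" by (rule exp_ge_one_plus_x_over_n_power_n) (use assms in auto)
  moreover have "(x/7)^7 \<le> (1 + x / real 7) ^ 7" using assms by (intro power_mono) auto
  moreover have "16 * x^6 \<le> (x/7)^7"
  proof -
    have "(x/7)^7 = x^6 * (x / 823543)" by (simp add: power_divide field_simps eval_nat_numeral)
    moreover have "16 \<le> x / 823543" using assms by simp
    moreover have "x^6 \<ge> 0" using assms by simp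
    ultimately show ?thesis by (metis mult.commute mult_right_mono)
  qed
  ultimately show ?thesis by linarith
qed

definition pr :: "nat \<Rightarrow> nat" where "pr u = (u + 1) div 2"
definition ee :: "nat \<Rightarrow> bool \<Rightarrow> real" where "ee u b = (if odd u = b then 1 else -1)"

lemma pr_range: "1 \<le> u \<Longrightarrow> u \<le> 2 * m \<Longrightarrow> pr u \<in> {1..m}"
  unfolding pr_def by auto

lemma pr_pair: "1 \<le> a \<Longrightarrow> pr a = pr y \<Longrightarrow> a \<in> {2 * pr y - 1, 2 * pr y}"
  unfolding pr_def by auto

lemma fiber_sub: "{u\<in>N. pr u = i} \<subseteq> {2*i - 1, 2*i}"
  unfolding pr_def by auto



lemma main_lemma:
  fixes d n :: nat and E :: "nat \<Rightarrow> nat \<Rightarrow> bool"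
  assumes dge: "d \<ge> 14000000^3" and ev: "even n" and reg: "regular_graph_on {1..n} E d"
  shows "\<exists>\<sigma>. \<sigma> \<subseteq> {1..n div 2} \<and> (\<forall>v\<in>{1..n}.
      \<bar>2 * real (card (nbhd E v \<inter> {u\<in>{1..n}. odd u = (pr u \<in> \<sigma>)})) - d\<bar> \<le> 2 * real d powr (2/3))"
proof -
  define m where "m = n div 2"
  have n2: "n = 2 * m" using ev unfolding m_def by auto
  define I where "I = {1..m}"
  define V where "V = {1..n}"
  define N where "N v = nbhd E v" for v
  define x where "x = real d powr (1/3)"
  have dpos: "real d > 0" using dge by simp
  have xpos: "x > 0" unfolding x_def using dpos by simp
  have x3: "x^3 = real d" unfolding x_def using dpos
    by (simp add: powr_realpow[symmetric] powr_powr)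
  have x2: "x^2 = real d powr (2/3)" unfolding x_def using dpos
    by (simp add: powr_realpow[symmetric] powr_powr)
  have xge: "x \<ge> 14000000"
  proof -
    have "(14000000::real) = (real (14000000^3)) powr (1/3)"
      by (simp add: powr_realpow[symmetric] powr_powr)
    also have "\<dots> \<le> x" unfolding x_def using dge by (intro powr_mono2) auto
    finally show ?thesis .
  qed
  have sg: "simple_graph_on V E" and degs: "\<And>v. v \<in> V \<Longrightarrow> card (N v) = d"
    using reg unfolding regular_graph_on_def V_def N_def by auto
  have NV: "N v \<subseteq> V" for v using sg unfolding simple_graph_on_def N_def nbhd_def by auto
  have finV: "finite V" unfolding V_def by simp
  have finN: "finite (N v)" for v using NV finV finite_subset by blast
  have cardN: "card (N v) \<le> d" for v
  proof (cases "v \<in> V")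
    case True thus ?thesis using degs by simp
  next
    case False
    hence "N v = {}" using sg unfolding simple_graph_on_def N_def nbhd_def by auto
    thus ?thesis by simp
  qed
  have symE: "E a b \<Longrightarrow> E b a" for a b using sg unfolding simple_graph_on_def by auto
  have prI: "u \<in> V \<Longrightarrow> pr u \<in> I" for u unfolding V_def I_def using pr_range[of u m] n2 by auto
  define hh where "hh v i b = (\<Sum>u\<in>{u\<in>N v. pr u = i}. ee u b)" for v i b
  define F where "F v \<sigma> = (\<Sum>i\<in>I. hh v i (i \<in> \<sigma>))" for v \<sigma>
  define A where "A v = {\<sigma>\<in>Pow I. 2 * x^2 < \<bar>F v \<sigma>\<bar>}" for v
  define S where "S v = pr ` N v" for v
  define p where "p = 2 * exp (- x)"
  have finI: "finite I" unfolding I_def by simp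
  have Fsum: "F v \<sigma> = (\<Sum>u\<in>N v. ee u (pr u \<in> \<sigma>))" for v \<sigma>
  proof -
    have "F v \<sigma> = (\<Sum>i\<in>I. \<Sum>u\<in>{u\<in>N v. pr u = i}. ee u (pr u \<in> \<sigma>))"
      unfolding F_def hh_def by (intro sum.cong refl) auto
    also have "\<dots> = (\<Sum>u\<in>N v. ee u (pr u \<in> \<sigma>))"
      by (rule sum.group[OF finN finI]) (use NV prI in auto)
    finally show ?thesis .
  qed
  have det: "\<sigma> \<in> A v \<longleftrightarrow> \<sigma> \<inter> S v \<in> A v" if "\<sigma> \<in> Pow I" for v \<sigma>
  proof -
    have "F v \<sigma> = F v (\<sigma> \<inter> S v)" unfolding Fsum S_def by (intro sum.cong refl) auto
    thus ?thesis unfolding A_def using that by auto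
  qed
  have prob: "real (card (A v)) \<le> p * card (Pow I)" for v
  proof -
    have anti: "hh v i False = - hh v i True" for i
      unfolding hh_def ee_def sum_negf[symmetric] by (rule sum.cong) auto
    have sq: "(\<Sum>i\<in>I. (hh v i True)^2) \<le> 2 * real d"
    proof -
      have "(hh v i True)^2 \<le> 2 * real (card {u\<in>N v. pr u = i})" for i
      proof -
        have c2: "card {u\<in>N v. pr u = i} \<le> 2"
        proof -
          have "card {u\<in>N v. pr u = i} \<le> card {2*i - 1, 2*i}"
            by (rule card_mono) (use fiber_sub[of "N v" i] in auto)
          also have "\<dots> \<le> 2" by (simp add: card_insert_if)
          finally show ?thesis .
        qed
        have "\<bar>hh v i True\<bar> \<le> (\<Sum>u\<in>{u\<in>N v. pr u = i}. \<bar>ee u True\<bar>)"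
          unfolding hh_def by (rule sum_abs)
        also have "\<dots> = (\<Sum>u\<in>{u\<in>N v. pr u = i}. 1)" by (rule sum.cong) (auto simp: ee_def)
        also have "\<dots> = card {u\<in>N v. pr u = i}" by simp
        finally have a: "\<bar>hh v i True\<bar> \<le> card {u\<in>N v. pr u = i}" .
        have "(hh v i True)^2 = \<bar>hh v i True\<bar> * \<bar>hh v i True\<bar>" by (simp add: power2_eq_square)
        also have "\<dots> \<le> real (card {u\<in>N v. pr u = i}) * 2"
          using a c2 by (intro mult_mono) auto
        finally show ?thesis by simp
      qed
      hence "(\<Sum>i\<in>I. (hh v i True)^2) \<le> (\<Sum>i\<in>I. 2 * real (card {u\<in>N v. pr u = i}))"
        by (intro sum_mono) auto
      also have "\<dots> = 2 * real (\<Sum>i\<in>I. card {u\<in>N v. pr u = i})"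
        by (simp add: sum_distrib_left)
      also have "(\<Sum>i\<in>I. card {u\<in>N v. pr u = i}) = card (N v)"
      proof -
        have "(\<Sum>i\<in>I. card {u\<in>N v. pr u = i}) = (\<Sum>i\<in>I. \<Sum>u\<in>{u\<in>N v. pr u = i}. 1::nat)" by simp
        also have "\<dots> = (\<Sum>u\<in>N v. 1)" by (rule sum.group[OF finN finI]) (use NV prI in auto)
        finally show ?thesis by simp
      qed
      finally show ?thesis using cardN[of v] by simp
    qed
    have "real (card (A v)) \<le> 2 * 2 ^ card I * exp ((1/x)^2 * (2 * real d) / 2 - (1/x) * (2 * x^2))"
      unfolding A_def F_def by (rule tail_bound[OF finI anti sq]) (use xpos in simp)
    also have "(1/x)^2 * (2 * real d) / 2 - (1/x) * (2 * x^2) = - x"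
      using xpos unfolding x3[symmetric] by (simp add: field_simps power2_eq_square eval_nat_numeral)
    also have "2 ^ card I = real (card (Pow I))" using finI by (simp add: card_Pow)
    finally show ?thesis unfolding p_def by (simp add: mult_ac)
  qed
  have dep: "card {w\<in>V. S w \<inter> S v \<noteq> {}} \<le> 2 * d^2" for v
  proof -
    have sub: "{w\<in>V. S w \<inter> S v \<noteq> {}} \<subseteq> (\<Union>y\<in>N v. \<Union>z\<in>{2 * pr y - 1, 2 * pr y}. N z)"
    proof
      fix w assume "w \<in> {w\<in>V. S w \<inter> S v \<noteq> {}}"
      then obtain a y where a: "a \<in> N w" and y: "y \<in> N v" and eq: "pr a = pr y"
        unfolding S_def by auto
      have "a \<in> V" using a NV by auto
      hence "a \<ge> 1" unfolding V_def by auto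
      hence "a \<in> {2 * pr y - 1, 2 * pr y}" using pr_pair eq by blast
      moreover have "w \<in> N a" using a symE unfolding N_def nbhd_def by auto
      ultimately show "w \<in> (\<Union>y\<in>N v. \<Union>z\<in>{2 * pr y - 1, 2 * pr y}. N z)" using y by blast
    qed
    have "card {w\<in>V. S w \<inter> S v \<noteq> {}} \<le> card (\<Union>y\<in>N v. \<Union>z\<in>{2 * pr y - 1, 2 * pr y}. N z)"
      by (rule card_mono[OF _ sub]) (use finN finN in auto)
    also have "\<dots> \<le> (\<Sum>y\<in>N v. card (\<Union>z\<in>{2 * pr y - 1, 2 * pr y}. N z))"
      by (rule card_UN_le[OF finN])
    also have "\<dots> \<le> (\<Sum>y\<in>N v. 2 * d)"
    proof (rule sum_mono)
      fix y
      have "card (\<Union>z\<in>{2 * pr y - 1, 2 * pr y}. N z) \<le> (\<Sum>z\<in>{2 * pr y - 1, 2 * pr y}. card (N z))"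
        by (rule card_UN_le) simp
      also have "\<dots> \<le> (\<Sum>z\<in>{2 * pr y - 1, 2 * pr y}. d)" by (rule sum_mono) (rule cardN)
      also have "\<dots> \<le> 2 * d" by (simp add: card_insert_if)
      finally show "card (\<Union>z\<in>{2 * pr y - 1, 2 * pr y}. N z) \<le> 2 * d" .
    qed
    also have "\<dots> \<le> 2 * d^2" using cardN[of v] by (simp add: power2_eq_square)
    finally show ?thesis .
  qed
  have num: "16 * x^6 \<le> exp x" by (rule num_bound[OF xge])
  have d6: "real d ^ 2 = x^6" unfolding x3[symmetric] by (simp add: power_mult[symmetric])
  have ex: "exp (-x) * exp x = 1" by (simp flip: exp_add)
  have pD: "4 * p * real (2 * d^2) \<le> 1"
  proof -
    have "4 * p * real (2 * d^2) = 16 * x^6 * exp (-x)" unfolding p_def d6[symmetric] by simp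
    also have "\<dots> \<le> exp x * exp (-x)" using num by (intro mult_right_mono) auto
    finally show ?thesis using ex by (simp add: mult.commute)
  qed
  have p0: "0 \<le> p" unfolding p_def by simp
  have p1: "p < 1/2"
  proof -
    have "d \<ge> 1" using dge by simp
    hence "1 \<le> d^2" by (simp add: one_le_power)
    hence "real (2 * d^2) \<ge> 2" by (metis of_nat_le_iff mult_le_mono2 nat_mult_1_right of_nat_numeral)
    hence "4 * p * 2 \<le> 4 * p * real (2 * d^2)" using p0 by (intro mult_left_mono) auto
    thus ?thesis using pD by simp
  qed
  have "Pow I - \<Union>(A ` V) \<noteq> {}"
    by (rule lll[OF finI finV _ det prob dep pD p0 p1]) (auto simp: A_def)
  then obtain \<sigma> where s: "\<sigma> \<in> Pow I" "\<And>v. v \<in> V \<Longrightarrow> \<sigma> \<notin> A v" by blast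
  define X where "X = {u\<in>{1..n}. odd u = (pr u \<in> \<sigma>)}"
  have "\<bar>2 * real (card (N v \<inter> X)) - d\<bar> \<le> 2 * real d powr (2/3)" if vV: "v \<in> V" for v
  proof -
    have "\<bar>F v \<sigma>\<bar> \<le> 2 * x^2" using s(1) s(2)[OF vV] unfolding A_def by auto
    moreover have "F v \<sigma> = (\<Sum>u\<in>N v. if u \<in> X then 1 else -1)"
      unfolding Fsum using NV[of v] by (intro sum.cong refl) (auto simp: ee_def X_def V_def subset_iff)
    moreover have "(\<Sum>u\<in>N v. if u \<in> X then 1 else -1) = real (card (N v \<inter> X)) - card (N v - X)"
      using finN[of v] by (simp add: sum.If_cases Diff_eq)
    moreover have "card (N v - X) = d - card (N v \<inter> X)"
      using degs[OF vV] finN[of v] by (metis card_Diff_subset_Int finite_Int Int_commute inf_commute)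
    moreover have "card (N v \<inter> X) \<le> d"
      using degs[OF vV] finN[of v] by (metis card_mono inf_le1)
    ultimately show ?thesis using x2 by (simp add: of_nat_diff)
  qed
  moreover have "\<sigma> \<subseteq> {1..n div 2}" using s(1) unfolding I_def m_def by auto
  ultimately show ?thesis unfolding X_def N_def V_def by blast
qed



lemma card_X:
  assumes "\<sigma> \<subseteq> {1..m}"
  shows "card {u\<in>{1..2*m}. odd u = (pr u \<in> \<sigma>)} = m"
proof -
  define f where "f i = (if i \<in> \<sigma> then 2*i - 1 else 2*i)" for i :: nat
  have "{u\<in>{1..2*m}. odd u = (pr u \<in> \<sigma>)} = f ` {1..m}"
  proof (rule set_eqI, rule iffI)
    fix u assume u: "u \<in> {u\<in>{1..2*m}. odd u = (pr u \<in> \<sigma>)}"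
    have "pr u \<in> {1..m}" using u pr_range[of u m] by auto
    moreover have "u = f (pr u)" using u unfolding f_def pr_def by auto
    ultimately show "u \<in> f ` {1..m}" by blast
  next
    fix u assume "u \<in> f ` {1..m}"
    then obtain i where i: "i \<in> {1..m}" "u = f i" by blast
    have "pr (2*i - 1) = i" "pr (2*i) = i" using i unfolding pr_def by auto
    thus "u \<in> {u\<in>{1..2*m}. odd u = (pr u \<in> \<sigma>)}" using i unfolding f_def by auto
  qed
  moreover have "inj_on f {1..m}"
  proof (rule inj_onI)
    fix i j assume "i \<in> {1..m}" "j \<in> {1..m}" "f i = f j"
    thus "i = j" unfolding f_def by (auto split: if_splits)
  qed
  ultimately show ?thesis by (simp add: card_image)
qed

theorem lemma3p1:
  shows "\<exists>d0::nat. d0 > 0 \<and> (\<forall>d n E. d \<ge> d0 \<longrightarrow> n \<ge> d + 1 \<longrightarrow> even n \<longrightarrow>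
     regular_graph_on {1..n} E d \<longrightarrow>
     (\<exists>X Y. X \<union> Y = {1..n} \<and> X \<inter> Y = {} \<and> card X = n div 2 \<and> card Y = n div 2 \<and>
        (\<forall>(H, VH) \<in> {(bipartite_sub E X Y, X \<union> Y), (induced E X, X), (induced E Y, Y)}.
           \<forall>v\<in>VH. real d / 2 - real d powr (2/3) \<le> real (degree H v) \<and>
                   real (degree H v) \<le> real d / 2 + real d powr (2/3))))"
proof (intro exI[of _ "14000000^3"] conjI allI impI)
  fix d n :: nat and E
  assume dge: "14000000^3 \<le> d" and "n \<ge> d + 1" and ev: "even n" and reg: "regular_graph_on {1..n} E d"
  obtain \<sigma> where s: "\<sigma> \<subseteq> {1..n div 2}" and
    b: "\<And>v. v \<in> {1..n} \<Longrightarrow> \<bar>2 * real (card (nbhd E v \<inter> {u\<in>{1..n}. odd u = (pr u \<in> \<sigma>)})) - d\<bar> \<le> 2 * real d powr (2/3)"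
    using main_lemma[OF dge ev reg] by blast
  define X where "X = {u\<in>{1..n}. odd u = (pr u \<in> \<sigma>)}"
  define Y where "Y = {1..n} - X"
  define t where "t = real d powr (2/3)"
  have n2: "n = 2 * (n div 2)" using ev by auto
  have cX: "card X = n div 2" unfolding X_def using card_X[OF s] n2 by metis
  have "X \<subseteq> {1..n}" unfolding X_def by auto
  hence "card Y = card {1..n} - card X" unfolding Y_def
    by (intro card_Diff_subset) (auto intro: finite_subset)
  hence cY: "card Y = n div 2" using cX n2 by simp
  have NV: "nbhd E v \<subseteq> {1..n}" for v using reg unfolding regular_graph_on_def simple_graph_on_def nbhd_def by auto
  have finN: "finite (nbhd E v)" for v using NV finite_subset by blast
  have good: "d/2 - t \<le> card (nbhd E v \<inter> X) \<and> card (nbhd E v \<inter> X) \<le> d/2 + t \<and>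
              d/2 - t \<le> card (nbhd E v \<inter> Y) \<and> card (nbhd E v \<inter> Y) \<le> d/2 + t" if v: "v \<in> {1..n}" for v
  proof -
    have dv: "card (nbhd E v) = d" using reg v unfolding regular_graph_on_def by auto
    have "nbhd E v \<inter> Y = nbhd E v - (nbhd E v \<inter> X)" unfolding Y_def using NV by auto
    hence "card (nbhd E v \<inter> Y) = d - card (nbhd E v \<inter> X)" using dv finN by (simp add: card_Diff_subset)
    moreover have "card (nbhd E v \<inter> X) \<le> d" using dv finN by (metis card_mono inf_le1)
    moreover have "\<bar>2 * real (card (nbhd E v \<inter> X)) - d\<bar> \<le> 2 * t" using b[OF v] unfolding X_def t_def .
    ultimately show ?thesis by (simp add: of_nat_diff abs_le_iff)
  qed
  have XV: "X \<subseteq> {1..n}" "Y \<subseteq> {1..n}" unfolding X_def Y_def by auto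
  have eB: "nbhd (bipartite_sub E X Y) v = (if v \<in> X then nbhd E v \<inter> Y else nbhd E v \<inter> X)" if "v \<in> X \<union> Y" for v
    using that unfolding nbhd_def bipartite_sub_def Y_def by auto
  have eX: "nbhd (induced E X) v = nbhd E v \<inter> X" if "v \<in> X" for v
    using that unfolding nbhd_def induced_def by auto
  have eY: "nbhd (induced E Y) v = nbhd E v \<inter> Y" if "v \<in> Y" for v
    using that unfolding nbhd_def induced_def by auto
  show "\<exists>X Y. X \<union> Y = {1..n} \<and> X \<inter> Y = {} \<and> card X = n div 2 \<and> card Y = n div 2 \<and>
        (\<forall>(H, VH) \<in> {(bipartite_sub E X Y, X \<union> Y), (induced E X, X), (induced E Y, Y)}.
           \<forall>v\<in>VH. real d / 2 - real d powr (2/3) \<le> real (degree H v) \<and>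
                   real (degree H v) \<le> real d / 2 + real d powr (2/3))"
  proof (rule exI[of _ X], rule exI[of _ Y], intro conjI)
    show "X \<union> Y = {1..n}" unfolding Y_def X_def by auto
    show "X \<inter> Y = {}" unfolding Y_def X_def by auto
    show "card X = n div 2" by (fact cX)
    show "card Y = n div 2" by (fact cY)
    have h1: "\<forall>v\<in>X \<union> Y. real d / 2 - real d powr (2/3) \<le> real (degree (bipartite_sub E X Y) v) \<and>
            real (degree (bipartite_sub E X Y) v) \<le> real d / 2 + real d powr (2/3)"
    proof
      fix v assume v: "v \<in> X \<union> Y"
      hence "v \<in> {1..n}" using XV by auto
      thus "real d / 2 - real d powr (2/3) \<le> real (degree (bipartite_sub E X Y) v) \<and>
            real (degree (bipartite_sub E X Y) v) \<le> real d / 2 + real d powr (2/3)"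
        using good[of v] eB[OF v] unfolding Defs.degree_def t_def by auto
    qed
    have h2: "\<forall>v\<in>X. real d / 2 - real d powr (2/3) \<le> real (degree (induced E X) v) \<and>
            real (degree (induced E X) v) \<le> real d / 2 + real d powr (2/3)"
    proof
      fix v assume v: "v \<in> X"
      hence "v \<in> {1..n}" using XV by auto
      thus "real d / 2 - real d powr (2/3) \<le> real (degree (induced E X) v) \<and>
            real (degree (induced E X) v) \<le> real d / 2 + real d powr (2/3)"
        using good[of v] eX[OF v] unfolding Defs.degree_def t_def by auto
    qed
    have h3: "\<forall>v\<in>Y. real d / 2 - real d powr (2/3) \<le> real (degree (induced E Y) v) \<and>
            real (degree (induced E Y) v) \<le> real d / 2 + real d powr (2/3)"
    proof
      fix v assume v: "v \<in> Y"
      hence "v \<in> {1..n}" using XV by auto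
      thus "real d / 2 - real d powr (2/3) \<le> real (degree (induced E Y) v) \<and>
            real (degree (induced E Y) v) \<le> real d / 2 + real d powr (2/3)"
        using good[of v] eY[OF v] unfolding Defs.degree_def t_def by auto
    qed
    show "\<forall>(H, VH) \<in> {(bipartite_sub E X Y, X \<union> Y), (induced E X, X), (induced E Y, Y)}.
           \<forall>v\<in>VH. real d / 2 - real d powr (2/3) \<le> real (degree H v) \<and>
                   real (degree H v) \<le> real d / 2 + real d powr (2/3)"
      using h1 h2 h3 by simp
  qed
qed simp


end
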